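(* For all integers $m,n,p\ge 2$ and $s\ge 0$, the graph $H(m,n,p,s)$ is geodetic.
   Context: All graphs are finite, simple and undirected; a graph is geodetic if between any two vertices there is at most one shortest path. For integers $a,b\ge 2$, $s\ge 0$, the graph $h(a,b,s)$ is defined as follows. Take a complete graph on vertices $x_1,\dots,x_a$ (the "$K_a$") and a complete graph on vertices $y_1,\dots,y_b$ (the "$K_b$"). For each $i\in\{1,\dots,a\}$ take a star with center $c_i$ and leaves $\ell_{i,1},\dots,\ell_{i,b}$. For each $i$, join $x_i$ to $c_i$ by a path of length $s+1$ (with $s$ new internal vertices), and for each $i$ and each $j\in\{1,\dots,b\}$, join $\ell_{i,j}$ to $y_j$ by a path of length $s+1$ (with $s$ new internal vertices). The graph $H(m,n,p,s)$ is obtained by taking disjoint copies of $h(m,n,s)$, $h(n,p,s)$ and $h(p,m,s)$ and identifying cliques: the $K_n$ of $h(m,n,s)$ is identified (vertex by vertex, via a bijection) with the $K_n$ of $h(n,p,s)$, the $K_p$ of $h(n,p,s)$ with the $K_p$ of $h(p,m,s)$, and the $K_m$ of $h(p,m,s)$ with the $K_m$ of $h(m,n,s)$ (the resulting graph does not depend on the chosen bijections up to isomorphism). *)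

theory Defs
  imports Main
begin

definition is_walk :: "'a set \<Rightarrow> ('a \<Rightarrow> 'a \<Rightarrow> bool) \<Rightarrow> 'a list \<Rightarrow> bool" where
  "is_walk V E xs \<longleftrightarrow> xs \<noteq> [] \<and> set xs \<subseteq> V \<and>
     (\<forall>i. Suc i < length xs \<longrightarrow> E (xs ! i) (xs ! Suc i))"

definition is_path :: "'a set \<Rightarrow> ('a \<Rightarrow> 'a \<Rightarrow> bool) \<Rightarrow> 'a list \<Rightarrow> bool" where
  "is_path V E xs \<longleftrightarrow> is_walk V E xs \<and> distinct xs"

definition is_shortest_path :: "'a set \<Rightarrow> ('a \<Rightarrow> 'a \<Rightarrow> bool) \<Rightarrow> 'a \<Rightarrow> 'a \<Rightarrow> 'a list \<Rightarrow> bool" where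
  "is_shortest_path V E u v xs \<longleftrightarrow>
     is_path V E xs \<and> hd xs = u \<and> last xs = v \<and>
     (\<forall>ys. is_walk V E ys \<and> hd ys = u \<and> last ys = v \<longrightarrow> length xs \<le> length ys)"

definition geodetic :: "'a set \<Rightarrow> ('a \<Rightarrow> 'a \<Rightarrow> bool) \<Rightarrow> bool" where
  "geodetic V E \<longleftrightarrow>
     (\<forall>u\<in>V. \<forall>v\<in>V. \<forall>xs ys. is_shortest_path V E u v xs \<and> is_shortest_path V E u v ys \<longrightarrow> xs = ys)"

text \<open>Vertices: X i = x_i (the K_a), Y j = y_j (the K_b), C i = c_i (star centre),
  L i j = leaf l_{i,j}, P i t (1 \<le> t \<le> s) = internal vertices of the x_i--c_i path,
  Q i j t (1 \<le> t \<le> s) = internal vertices of the l_{i,j}--y_j path. Indices start at 0.\<close>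
datatype hv = X nat | Y nat | C nat | L nat nat | P nat nat | Q nat nat nat

definition xc_node :: "nat \<Rightarrow> nat \<Rightarrow> nat \<Rightarrow> hv" where
  "xc_node s i t = (if t = 0 then X i else if t = s + 1 then C i else P i t)"

definition ly_node :: "nat \<Rightarrow> nat \<Rightarrow> nat \<Rightarrow> nat \<Rightarrow> hv" where
  "ly_node s i j t = (if t = 0 then L i j else if t = s + 1 then Y j else Q i j t)"

definition h_verts :: "nat \<Rightarrow> nat \<Rightarrow> nat \<Rightarrow> hv set" where
  "h_verts a b s =
     {X i | i. i < a} \<union> {Y j | j. j < b} \<union> {C i | i. i < a} \<union>
     {L i j | i j. i < a \<and> j < b} \<union>
     {P i t | i t. i < a \<and> 1 \<le> t \<and> t \<le> s} \<union>
     {Q i j t | i j t. i < a \<and> j < b \<and> 1 \<le> t \<and> t \<le> s}"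

definition h_arc :: "nat \<Rightarrow> nat \<Rightarrow> nat \<Rightarrow> hv \<Rightarrow> hv \<Rightarrow> bool" where
  "h_arc a b s u v \<longleftrightarrow>
     (\<exists>i i'. i < a \<and> i' < a \<and> i \<noteq> i' \<and> u = X i \<and> v = X i') \<or>
     (\<exists>j j'. j < b \<and> j' < b \<and> j \<noteq> j' \<and> u = Y j \<and> v = Y j') \<or>
     (\<exists>i j. i < a \<and> j < b \<and> u = C i \<and> v = L i j) \<or>
     (\<exists>i t. i < a \<and> t \<le> s \<and> u = xc_node s i t \<and> v = xc_node s i (t + 1)) \<or>
     (\<exists>i j t. i < a \<and> j < b \<and> t \<le> s \<and> u = ly_node s i j t \<and> v = ly_node s i j (t + 1))"

definition h_edge :: "nat \<Rightarrow> nat \<Rightarrow> nat \<Rightarrow> hv \<Rightarrow> hv \<Rightarrow> bool" where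
  "h_edge a b s u v \<longleftrightarrow> h_arc a b s u v \<or> h_arc a b s v u"

text \<open>Copy k (k = 0,1,2) is h(sz k, sz (k+1 mod 3), s) with sz = (m,n,p), i.e. the copies
  h(m,n,s), h(n,p,s), h(p,m,s).  Gluing: the K_b (Y-vertices) of copy k is identified
  with the K_a (X-vertices) of copy (k+1) mod 3, via Y j of copy k ~ X j of copy k+1.
  The function H_canon maps each vertex of the disjoint union to its class representative.\<close>

definition H_size :: "nat \<Rightarrow> nat \<Rightarrow> nat \<Rightarrow> nat \<Rightarrow> nat" where
  "H_size m n p k = (if k = 0 then m else if k = 1 then n else p)"

fun H_canon :: "nat \<times> hv \<Rightarrow> nat \<times> hv" where
  "H_canon (k, Y j) = ((k + 1) mod 3, X j)"
| "H_canon (k, v) = (k, v)"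

definition H_verts :: "nat \<Rightarrow> nat \<Rightarrow> nat \<Rightarrow> nat \<Rightarrow> (nat \<times> hv) set" where
  "H_verts m n p s =
     H_canon ` (\<Union>k<3. {k} \<times> h_verts (H_size m n p k) (H_size m n p ((k + 1) mod 3)) s)"

definition H_edge :: "nat \<Rightarrow> nat \<Rightarrow> nat \<Rightarrow> nat \<Rightarrow> nat \<times> hv \<Rightarrow> nat \<times> hv \<Rightarrow> bool" where
  "H_edge m n p s u v \<longleftrightarrow>
     (\<exists>k<3. \<exists>x y. h_edge (H_size m n p k) (H_size m n p ((k + 1) mod 3)) s x y \<and>
        u = H_canon (k, x) \<and> v = H_canon (k, y))"

end

theory Submission imports Defs begin

datatype cv = St nat nat int | Br nat nat nat int

fun cp :: "cv \<Rightarrow> nat" where "cp (St k i q) = k" | "cp (Br k i j q) = k"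
fun sp :: "cv \<Rightarrow> nat" where "sp (St k i q) = i" | "sp (Br k i j q) = i"
fun br :: "cv \<Rightarrow> nat" where "br (St k i q) = 0" | "br (Br k i j q) = j"
fun ps :: "cv \<Rightarrow> int" where "ps (St k i q) = q" | "ps (Br k i j q) = q"

fun cvalid :: "nat \<Rightarrow> nat \<Rightarrow> nat \<Rightarrow> int \<Rightarrow> cv \<Rightarrow> bool" where
  "cvalid m n p l (St k i q) = (k < 3 \<and> i < H_size m n p k \<and> 0 \<le> q \<and> q \<le> l)"
| "cvalid m n p l (Br k i j q) = (k < 3 \<and> i < H_size m n p k \<and> j < H_size m n p ((k+1) mod 3) \<and> l+1 \<le> q \<and> q \<le> 2*l)"

fun carc :: "int \<Rightarrow> cv \<Rightarrow> cv \<Rightarrow> bool" where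
  "carc l (St k i q) (St k' i' q') = (k' = k \<and> ((q = 0 \<and> q' = 0 \<and> i \<noteq> i') \<or> (i' = i \<and> 0 \<le> q \<and> q < l \<and> q' = q+1)))"
| "carc l (St k i q) (Br k' i' j q') = (k' = k \<and> i' = i \<and> q = l \<and> q' = l+1)"
| "carc l (Br k i j q) (Br k' i' j' q') = (k'=k \<and> i'=i \<and> j'=j \<and> l+1 \<le> q \<and> q < 2*l \<and> q' = q+1)"
| "carc l (Br k i j q) (St k' i' q') = (k' = (k+1) mod 3 \<and> i' = j \<and> q = 2*l \<and> q' = 0)"

definition cedge :: "int \<Rightarrow> cv \<Rightarrow> cv \<Rightarrow> bool" where
  "cedge l a b \<longleftrightarrow> carc l a b \<or> carc l b a"

fun Aq :: "int \<Rightarrow> cv \<Rightarrow> nat \<Rightarrow> int" where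
  "Aq l (St k i q) i' = 2*l+1-q"
| "Aq l (Br k i j q) i' = (if j = i' then 2*l+1-q else min (2*l+2-q) (q+1))"

fun Dsame :: "int \<Rightarrow> cv \<Rightarrow> cv \<Rightarrow> int" where
  "Dsame l (St k i q) (St k' i' q') = (if i = i' then \<bar>q-q'\<bar> else q+q'+1)"
| "Dsame l (St k i q) (Br k' i' j' q') = (if i = i' then q'-q else min (q+q'+1) (4*l+2-q-q'))"
| "Dsame l (Br k i j q) (St k' i' q') = (if i = i' then q-q' else min (q+q'+1) (4*l+2-q-q'))"
| "Dsame l (Br k i j q) (Br k' i' j' q') = (if i = i' then (if j = j' then \<bar>q-q'\<bar> else min (q+q'-2*l) (4*l+3-q-q')) else min (q+q'+1) (4*l+2-q-q' + (if j = j' then 0 else 1)))"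

definition Dnext :: "int \<Rightarrow> cv \<Rightarrow> cv \<Rightarrow> int" where
  "Dnext l a b = min (Aq l a (sp b) + ps b) (ps a + 4*l+2 - ps b)"

definition D :: "int \<Rightarrow> cv \<Rightarrow> cv \<Rightarrow> int" where
  "D l a b = (if cp a = cp b then Dsame l a b else if cp b = (cp a + 1) mod 3 then Dnext l a b else Dnext l b a)"

lemma k3: "(k::nat) < 3 \<Longrightarrow> k = 0 \<or> k = 1 \<or> k = 2" by auto


lemma k3E: "(k::nat) < 3 \<Longrightarrow> (k = 0 \<Longrightarrow> R) \<Longrightarrow> (k = 1 \<Longrightarrow> R) \<Longrightarrow> (k = 2 \<Longrightarrow> R) \<Longrightarrow> R"
  by (cases k; cases "k - 1"; auto)

definition node :: "int \<Rightarrow> nat \<Rightarrow> nat \<Rightarrow> nat \<Rightarrow> int \<Rightarrow> cv" where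
  "node l k i j q = (if q \<le> l then St k i q else if q \<le> 2*l then Br k i j q else St ((k+1) mod 3) j 0)"

definition parQ :: "int \<Rightarrow> cv \<Rightarrow> nat \<Rightarrow> nat \<Rightarrow> cv" where
  "parQ l w k i = (if cp w = k then (if sp w = i then St k i 1 else St k (sp w) 0)
     else if cp w = (k+1) mod 3 then (if D l w (St k i 1) + 1 = D l w (St k i 0) then St k i 1 else Br ((k+2) mod 3) (br w) i (2*l))
     else (if br w \<noteq> i \<and> D l w (St k (br w) 0) + 1 = D l w (St k i 0) then St k (br w) 0 else Br ((k+2) mod 3) (sp w) i (2*l)))"

fun par :: "int \<Rightarrow> cv \<Rightarrow> cv \<Rightarrow> cv" where
  "par l w (Br k i j q) = (if D l w (node l k i j (q-1)) + 1 = D l w (Br k i j q) then node l k i j (q-1) else node l k i j (q+1))"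
| "par l w (St k i q) = (if q = 0 then parQ l w k i
     else if D l w (St k i (q-1)) + 1 = D l w (St k i q) then St k i (q-1)
     else if q < l then St k i (q+1)
     else Br k i (if cp w = k then br w else if cp w = (k+1) mod 3 then sp w else 0) (l+1))"

lemma walk_stepD:
  assumes "is_walk V E xs" "Suc i < length xs"
  shows "E (xs!i) (xs!Suc i)" "xs!i \<in> V" "xs!Suc i \<in> V"
  using assms unfolding is_walk_def by (auto dest: nth_mem)

lemma walk_lip:
  fixes d :: "'a \<Rightarrow> 'a \<Rightarrow> int"
  assumes lip: "\<And>u v. u\<in>V \<Longrightarrow> v\<in>V \<Longrightarrow> E u v \<Longrightarrow> d w v \<le> d w u + 1"
    and sym: "\<And>u v. E u v \<Longrightarrow> E v u"
    and wk: "is_walk V E xs"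
  shows "i \<le> j \<Longrightarrow> j < length xs \<Longrightarrow> d w (xs!j) \<le> d w (xs!i) + int (j-i) \<and> d w (xs!i) \<le> d w (xs!j) + int (j - i)"
proof (induction j)
  case 0 then show ?case by simp
next
  case (Suc j)
  show ?case
  proof (cases "i = Suc j")
    case True then show ?thesis by simp
  next
    case False
    then have ij: "i \<le> j" using Suc.prems by simp
    have IH: "d w (xs!j) \<le> d w (xs!i) + int (j-i) \<and> d w (xs!i) \<le> d w (xs!j) + int (j - i)"
      using Suc.IH ij Suc.prems by simp
    have e: "E (xs!j) (xs!Suc j)" "xs!j \<in> V" "xs!Suc j \<in> V" using walk_stepD[OF wk] Suc.prems by auto
    have a: "d w (xs!Suc j) \<le> d w (xs!j) + 1" using lip e by auto
    have b: "d w (xs!j) \<le> d w (xs!Suc j) + 1" using lip sym e by auto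
    have c: "int (Suc j - i) = int (j - i) + 1" using ij by simp
    show ?thesis using IH a b c by linarith
  qed
qed

lemma walk_exists:
  fixes d :: "'a \<Rightarrow> 'a \<Rightarrow> int"
  assumes wV: "w \<in> V" and dww: "d w w = 0"
    and dpos: "\<And>v. v\<in>V \<Longrightarrow> d w v = 0 \<Longrightarrow> v = w"
    and ex: "\<And>v. v\<in>V \<Longrightarrow> v\<noteq>w \<Longrightarrow> \<exists>u\<in>V. E u v \<and> d w u + 1 = d w v"
  shows "v \<in> V \<Longrightarrow> d w v = int N \<Longrightarrow> \<exists>xs. is_walk V E xs \<and> hd xs = w \<and> last xs = v \<and> length xs = N + 1"
proof (induction N arbitrary: v)
  case 0
  then have "v = w" using dpos by simp
  then show ?case using 0 by (intro exI[of _ "[v]"]) (auto simp: is_walk_def)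
next
  case (Suc N)
  have "v \<noteq> w"
  proof
    assume "v = w" then have "d w v = 0" using dww by simp
    with Suc.prems show False by simp
  qed
  then obtain u where u: "u \<in> V" "E u v" "d w u + 1 = d w v" using ex Suc.prems by blast
  then have "d w u = int N" using Suc.prems by simp
  then obtain xs where xs: "is_walk V E xs" "hd xs = w" "last xs = u" "length xs = N + 1"
    using Suc.IH u by blast
  have "is_walk V E (xs @ [v])"
    unfolding is_walk_def
  proof (intro conjI allI impI)
    show "xs @ [v] \<noteq> []" by simp
    show "set (xs @ [v]) \<subseteq> V" using xs(1) Suc.prems unfolding is_walk_def by auto
    fix i assume i: "Suc i < length (xs @ [v])"
    show "E ((xs @ [v]) ! i) ((xs @ [v]) ! Suc i)"
    proof (cases "Suc i < length xs")
      case True then show ?thesis using xs(1) unfolding is_walk_def by (simp add: nth_append)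
    next
      case False
      then have "i = length xs - 1" "xs \<noteq> []" using i xs(4) by auto
      then show ?thesis using u(2) xs(3) False by (simp add: nth_append last_conv_nth)
    qed
  qed
  moreover have "hd (xs @ [v]) = w" using xs by (cases xs) auto
  ultimately show ?case using xs(4) by (intro exI[of _ "xs @ [v]"]) simp
qed

lemma geodetic_from_dist:
  fixes V :: "'a set" and E and d :: "'a \<Rightarrow> 'a \<Rightarrow> int"
  assumes d0: "\<And>u. u\<in>V \<Longrightarrow> d u u = 0"
    and dnn: "\<And>w v. w\<in>V \<Longrightarrow> v\<in>V \<Longrightarrow> d w v \<ge> 0"
    and dpos: "\<And>w v. w\<in>V \<Longrightarrow> v\<in>V \<Longrightarrow> d w v = 0 \<Longrightarrow> v = w"
    and lip: "\<And>w u v. w\<in>V \<Longrightarrow> u\<in>V \<Longrightarrow> v\<in>V \<Longrightarrow> E u v \<Longrightarrow> d w v \<le> d w u + 1"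
    and sym: "\<And>u v. E u v \<Longrightarrow> E v u"
    and ex: "\<And>w v. w\<in>V \<Longrightarrow> v\<in>V \<Longrightarrow> v\<noteq>w \<Longrightarrow> \<exists>u\<in>V. E u v \<and> d w u + 1 = d w v"
    and uq: "\<And>w u u' v. w\<in>V \<Longrightarrow> u\<in>V \<Longrightarrow> u'\<in>V \<Longrightarrow> v\<in>V \<Longrightarrow> E u v \<Longrightarrow> E u' v \<Longrightarrow>
               d w u + 1 = d w v \<Longrightarrow> d w u' + 1 = d w v \<Longrightarrow> u = u'"
  shows "geodetic V E"
  unfolding geodetic_def
proof (intro ballI allI impI, elim conjE)
  fix w v xs ys
  assume wV: "w \<in> V" and vV: "v \<in> V"
  assume sx: "is_shortest_path V E w v xs" and sy: "is_shortest_path V E w v ys"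
  obtain N where N: "d w v = int N" using dnn[OF wV vV] nonneg_int_cases by metis
  obtain zs where zs: "is_walk V E zs" "hd zs = w" "last zs = v" "length zs = N + 1"
    using walk_exists[where d=d and w=w and V=V and E=E and v=v and N=N, OF wV d0[OF wV]] dpos[OF wV] ex[OF wV] vV N by blast
  have key: "length zl = N + 1 \<and> (\<forall>i<length zl. d w (zl!i) = int i)"
    if sa: "is_shortest_path V E w v zl" for zl
  proof -
    have wa: "is_walk V E zl" "hd zl = w" "last zl = v" "distinct zl"
      using sa unfolding is_shortest_path_def is_path_def by auto
    have ne: "zl \<noteq> []" using wa(1) unfolding is_walk_def by simp
    have le: "length zl \<le> N + 1" using sa zs unfolding is_shortest_path_def by auto
    have lipw: "\<And>u v. u\<in>V \<Longrightarrow> v\<in>V \<Longrightarrow> E u v \<Longrightarrow> d w v \<le> d w u + 1" using lip wV by blast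
    have h0: "zl!0 = w" using wa(2) ne by (simp add: hd_conv_nth)
    have hl: "zl!(length zl - 1) = v" using wa(3) ne by (simp add: last_conv_nth)
    have A: "d w (zl!i) \<le> int i" if "i < length zl" for i
      using walk_lip[where d=d and w=w, OF lipw sym wa(1), of 0 i] that h0 d0[OF wV] by simp
    have "int N \<le> int (length zl - 1)" using A[of "length zl - 1"] hl N ne by simp
    then have len: "length zl = N + 1" using le ne by (cases zl) auto
    have "d w (zl!i) = int i" if "i < length zl" for i
    proof -
      have "d w v \<le> d w (zl!i) + int (length zl - 1 - i)"
        using walk_lip[where d=d and w=w, OF lipw sym wa(1), of i "length zl - 1"] that hl by simp
      then show ?thesis using A[OF that] N len that by simp
    qed
    then show ?thesis using len by simp
  qed
  have kx: "length xs = N + 1" "\<And>i. i < length xs \<Longrightarrow> d w (xs!i) = int i" using key[OF sx] by auto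
  have ky: "length ys = N + 1" "\<And>i. i < length ys \<Longrightarrow> d w (ys!i) = int i" using key[OF sy] by auto
  have wx: "is_walk V E xs" "last xs = v" using sx unfolding is_shortest_path_def is_path_def by auto
  have wy: "is_walk V E ys" "last ys = v" using sy unfolding is_shortest_path_def is_path_def by auto
  have bkw: "xs!(N - r) = ys!(N - r)" for r
  proof (induction r)
    case 0
    have "xs \<noteq> []" "ys \<noteq> []" using kx ky by auto
    then show ?case using wx wy kx ky by (simp add: last_conv_nth)
  next
    case (Suc r)
    show ?case
    proof (cases "Suc r \<le> N")
      case False
      then have "N - Suc r = N - r" by simp
      then show ?thesis using Suc.IH by simp
    next
      case True
      define i where "i = N - Suc r"
      have si: "Suc i = N - r" "Suc i < length xs" "Suc i < length ys" using True kx ky unfolding i_def by auto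
      have ex1: "E (xs!i) (xs!Suc i)" "xs!i \<in> V" "xs!Suc i \<in> V" using walk_stepD[OF wx(1) si(2)] by auto
      have ey1: "E (ys!i) (ys!Suc i)" "ys!i \<in> V" "ys!Suc i \<in> V" using walk_stepD[OF wy(1) si(3)] by auto
      have eq: "xs!Suc i = ys!Suc i" using Suc.IH si(1) by simp
      have dx: "d w (xs!i) + 1 = d w (xs!Suc i)" using kx(2)[of i] kx(2)[of "Suc i"] si by simp
      have dy: "d w (ys!i) + 1 = d w (xs!Suc i)" using ky(2)[of i] kx(2)[of "Suc i"] si by simp
      show ?thesis unfolding i_def[symmetric]
        using uq[OF wV ex1(2) ey1(2) ex1(3) ex1(1) _ dx dy] ey1(1) eq by simp
    qed
  qed
  show "xs = ys"
  proof (rule nth_equalityI)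
    show "length xs = length ys" using kx ky by simp
    fix i assume "i < length xs"
    then have "i = N - (N - i)" using kx by simp
    then show "xs!i = ys!i" using bkw[of "N - i"] by metis
  qed
qed

lemma lip_St_E1_0:
  assumes "kw < 3" "k < 3" "0 \<le> qw" "qw \<le> l" "i \<noteq> i2" "l \<ge> 1"
  shows "D l (St kw iw qw) (St k i2 0) \<le> D l (St kw iw qw) (St k i 0) + 1"
  by (rule k3E[OF assms(1)]; rule k3E[OF assms(2)]; insert assms(3-); simp add: D_def Dnext_def; (auto simp: abs_if min_def split: if_splits; presburger)?)

lemma lip_St_E1_1:
  assumes "kw < 3" "k < 3" "0 \<le> qw" "qw \<le> l" "i \<noteq> i2" "l \<ge> 1"
  shows "D l (St kw iw qw) (St k i 0) \<le> D l (St kw iw qw) (St k i2 0) + 1"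
  by (rule k3E[OF assms(1)]; rule k3E[OF assms(2)]; insert assms(3-); simp add: D_def Dnext_def; (auto simp: abs_if min_def split: if_splits; presburger)?)

lemma lip_St_E2_0:
  assumes "kw < 3" "k < 3" "0 \<le> qw" "qw \<le> l" "0 \<le> q" "q < l" "l \<ge> 1"
  shows "D l (St kw iw qw) (St k i (q+1)) \<le> D l (St kw iw qw) (St k i q) + 1"
  by (rule k3E[OF assms(1)]; rule k3E[OF assms(2)]; insert assms(3-); simp add: D_def Dnext_def; (auto simp: abs_if min_def split: if_splits; presburger)?)

lemma lip_St_E2_1:
  assumes "kw < 3" "k < 3" "0 \<le> qw" "qw \<le> l" "0 \<le> q" "q < l" "l \<ge> 1"
  shows "D l (St kw iw qw) (St k i q) \<le> D l (St kw iw qw) (St k i (q+1)) + 1"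
  by (rule k3E[OF assms(1)]; rule k3E[OF assms(2)]; insert assms(3-); simp add: D_def Dnext_def; (auto simp: abs_if min_def split: if_splits; presburger)?)

lemma lip_St_E3_0:
  assumes "kw < 3" "k < 3" "0 \<le> qw" "qw \<le> l" "l \<ge> 1"
  shows "D l (St kw iw qw) (Br k i j (l+1)) \<le> D l (St kw iw qw) (St k i l) + 1"
  by (rule k3E[OF assms(1)]; rule k3E[OF assms(2)]; insert assms(3-); simp add: D_def Dnext_def; (auto simp: abs_if min_def split: if_splits; presburger)?)

lemma lip_St_E3_1:
  assumes "kw < 3" "k < 3" "0 \<le> qw" "qw \<le> l" "l \<ge> 1"
  shows "D l (St kw iw qw) (St k i l) \<le> D l (St kw iw qw) (Br k i j (l+1)) + 1"
  by (rule k3E[OF assms(1)]; rule k3E[OF assms(2)]; insert assms(3-); simp add: D_def Dnext_def; (auto simp: abs_if min_def split: if_splits; presburger)?)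

lemma lip_St_E4_0:
  assumes "kw < 3" "k < 3" "0 \<le> qw" "qw \<le> l" "l+1 \<le> q" "q < 2*l" "l \<ge> 1"
  shows "D l (St kw iw qw) (Br k i j (q+1)) \<le> D l (St kw iw qw) (Br k i j q) + 1"
  by (rule k3E[OF assms(1)]; rule k3E[OF assms(2)]; insert assms(3-); simp add: D_def Dnext_def; (auto simp: abs_if min_def split: if_splits; presburger)?)

lemma lip_St_E4_1:
  assumes "kw < 3" "k < 3" "0 \<le> qw" "qw \<le> l" "l+1 \<le> q" "q < 2*l" "l \<ge> 1"
  shows "D l (St kw iw qw) (Br k i j q) \<le> D l (St kw iw qw) (Br k i j (q+1)) + 1"
  by (rule k3E[OF assms(1)]; rule k3E[OF assms(2)]; insert assms(3-); simp add: D_def Dnext_def; (auto simp: abs_if min_def split: if_splits; presburger)?)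

lemma lip_St_E5_0:
  assumes "kw < 3" "k < 3" "k2 = (k+1) mod 3" "0 \<le> qw" "qw \<le> l" "l \<ge> 1"
  shows "D l (St kw iw qw) (St k2 j 0) \<le> D l (St kw iw qw) (Br k i j (2*l)) + 1"
  by (rule k3E[OF assms(1)]; rule k3E[OF assms(2)]; insert assms(3-); simp add: D_def Dnext_def; (auto simp: abs_if min_def split: if_splits; presburger)?)

lemma lip_St_E5_1:
  assumes "kw < 3" "k < 3" "k2 = (k+1) mod 3" "0 \<le> qw" "qw \<le> l" "l \<ge> 1"
  shows "D l (St kw iw qw) (Br k i j (2*l)) \<le> D l (St kw iw qw) (St k2 j 0) + 1"
  by (rule k3E[OF assms(1)]; rule k3E[OF assms(2)]; insert assms(3-); simp add: D_def Dnext_def; (auto simp: abs_if min_def split: if_splits; presburger)?)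

lemma lip_Br_E1_0:
  assumes "kw < 3" "k < 3" "l+1 \<le> qw" "qw \<le> 2*l" "i \<noteq> i2" "l \<ge> 1"
  shows "D l (Br kw iw jw qw) (St k i2 0) \<le> D l (Br kw iw jw qw) (St k i 0) + 1"
  by (rule k3E[OF assms(1)]; rule k3E[OF assms(2)]; insert assms(3-); simp add: D_def Dnext_def; (auto simp: abs_if min_def split: if_splits; presburger)?)

lemma lip_Br_E1_1:
  assumes "kw < 3" "k < 3" "l+1 \<le> qw" "qw \<le> 2*l" "i \<noteq> i2" "l \<ge> 1"
  shows "D l (Br kw iw jw qw) (St k i 0) \<le> D l (Br kw iw jw qw) (St k i2 0) + 1"
  by (rule k3E[OF assms(1)]; rule k3E[OF assms(2)]; insert assms(3-); simp add: D_def Dnext_def; (auto simp: abs_if min_def split: if_splits; presburger)?)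

lemma lip_Br_E2_0:
  assumes "kw < 3" "k < 3" "l+1 \<le> qw" "qw \<le> 2*l" "0 \<le> q" "q < l" "l \<ge> 1"
  shows "D l (Br kw iw jw qw) (St k i (q+1)) \<le> D l (Br kw iw jw qw) (St k i q) + 1"
  by (rule k3E[OF assms(1)]; rule k3E[OF assms(2)]; insert assms(3-); simp add: D_def Dnext_def; (auto simp: abs_if min_def split: if_splits; presburger)?)

lemma lip_Br_E2_1:
  assumes "kw < 3" "k < 3" "l+1 \<le> qw" "qw \<le> 2*l" "0 \<le> q" "q < l" "l \<ge> 1"
  shows "D l (Br kw iw jw qw) (St k i q) \<le> D l (Br kw iw jw qw) (St k i (q+1)) + 1"
  by (rule k3E[OF assms(1)]; rule k3E[OF assms(2)]; insert assms(3-); simp add: D_def Dnext_def; (auto simp: abs_if min_def split: if_splits; presburger)?)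

lemma lip_Br_E3_0:
  assumes "kw < 3" "k < 3" "l+1 \<le> qw" "qw \<le> 2*l" "l \<ge> 1"
  shows "D l (Br kw iw jw qw) (Br k i j (l+1)) \<le> D l (Br kw iw jw qw) (St k i l) + 1"
  by (rule k3E[OF assms(1)]; rule k3E[OF assms(2)]; insert assms(3-); simp add: D_def Dnext_def; (auto simp: abs_if min_def split: if_splits; presburger)?)

lemma lip_Br_E3_1:
  assumes "kw < 3" "k < 3" "l+1 \<le> qw" "qw \<le> 2*l" "l \<ge> 1"
  shows "D l (Br kw iw jw qw) (St k i l) \<le> D l (Br kw iw jw qw) (Br k i j (l+1)) + 1"
  by (rule k3E[OF assms(1)]; rule k3E[OF assms(2)]; insert assms(3-); simp add: D_def Dnext_def; (auto simp: abs_if min_def split: if_splits; presburger)?)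

lemma lip_Br_E4_0:
  assumes "kw < 3" "k < 3" "l+1 \<le> qw" "qw \<le> 2*l" "l+1 \<le> q" "q < 2*l" "l \<ge> 1"
  shows "D l (Br kw iw jw qw) (Br k i j (q+1)) \<le> D l (Br kw iw jw qw) (Br k i j q) + 1"
  by (rule k3E[OF assms(1)]; rule k3E[OF assms(2)]; insert assms(3-); simp add: D_def Dnext_def; (auto simp: abs_if min_def split: if_splits; presburger)?)

lemma lip_Br_E4_1:
  assumes "kw < 3" "k < 3" "l+1 \<le> qw" "qw \<le> 2*l" "l+1 \<le> q" "q < 2*l" "l \<ge> 1"
  shows "D l (Br kw iw jw qw) (Br k i j q) \<le> D l (Br kw iw jw qw) (Br k i j (q+1)) + 1"
  by (rule k3E[OF assms(1)]; rule k3E[OF assms(2)]; insert assms(3-); simp add: D_def Dnext_def; (auto simp: abs_if min_def split: if_splits; presburger)?)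

lemma lip_Br_E5_0:
  assumes "kw < 3" "k < 3" "k2 = (k+1) mod 3" "l+1 \<le> qw" "qw \<le> 2*l" "l \<ge> 1"
  shows "D l (Br kw iw jw qw) (St k2 j 0) \<le> D l (Br kw iw jw qw) (Br k i j (2*l)) + 1"
  by (rule k3E[OF assms(1)]; rule k3E[OF assms(2)]; insert assms(3-); simp add: D_def Dnext_def; (auto simp: abs_if min_def split: if_splits; presburger)?)

lemma lip_Br_E5_1:
  assumes "kw < 3" "k < 3" "k2 = (k+1) mod 3" "l+1 \<le> qw" "qw \<le> 2*l" "l \<ge> 1"
  shows "D l (Br kw iw jw qw) (Br k i j (2*l)) \<le> D l (Br kw iw jw qw) (St k2 j 0) + 1"
  by (rule k3E[OF assms(1)]; rule k3E[OF assms(2)]; insert assms(3-); simp add: D_def Dnext_def; (auto simp: abs_if min_def split: if_splits; presburger)?)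

lemma pB_St_fe:
  assumes "kw < 3" "k < 3" "k2 = (k+1) mod 3" "0 \<le> qw" "qw \<le> l" "l+1 \<le> q" "q \<le> 2*l" "q = l+1" "q = 2*l" "l \<ge> 1" "Br k i j q \<noteq> St kw iw qw" "D l (St kw iw qw) (St k i l) + 1 \<noteq> D l (St kw iw qw) (Br k i j q)"
  shows "D l (St kw iw qw) (St k2 j 0) + 1 = D l (St kw iw qw) (Br k i j q)"
  by (rule k3E[OF assms(1)]; rule k3E[OF assms(2)]; insert assms(3-); simp add: D_def Dnext_def; (auto simp: abs_if min_def split: if_splits; presburger)?)

lemma pB_St_fm:
  assumes "kw < 3" "k < 3" "k2 = (k+1) mod 3" "0 \<le> qw" "qw \<le> l" "l+1 \<le> q" "q \<le> 2*l" "q = l+1" "q < 2*l" "l \<ge> 1" "Br k i j q \<noteq> St kw iw qw" "D l (St kw iw qw) (St k i l) + 1 \<noteq> D l (St kw iw qw) (Br k i j q)"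
  shows "D l (St kw iw qw) (Br k i j (q + 1)) + 1 = D l (St kw iw qw) (Br k i j q)"
  by (rule k3E[OF assms(1)]; rule k3E[OF assms(2)]; insert assms(3-); simp add: D_def Dnext_def; (auto simp: abs_if min_def split: if_splits; presburger)?)

lemma pB_St_me:
  assumes "kw < 3" "k < 3" "k2 = (k+1) mod 3" "0 \<le> qw" "qw \<le> l" "l+1 \<le> q" "q \<le> 2*l" "l+1 < q" "q = 2*l" "l \<ge> 1" "Br k i j q \<noteq> St kw iw qw" "D l (St kw iw qw) (Br k i j (q - 1)) + 1 \<noteq> D l (St kw iw qw) (Br k i j q)"
  shows "D l (St kw iw qw) (St k2 j 0) + 1 = D l (St kw iw qw) (Br k i j q)"
  by (rule k3E[OF assms(1)]; rule k3E[OF assms(2)]; insert assms(3-); simp add: D_def Dnext_def; (auto simp: abs_if min_def split: if_splits; presburger)?)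

lemma pB_St_mm:
  assumes "kw < 3" "k < 3" "k2 = (k+1) mod 3" "0 \<le> qw" "qw \<le> l" "l+1 \<le> q" "q \<le> 2*l" "l+1 < q" "q < 2*l" "l \<ge> 1" "Br k i j q \<noteq> St kw iw qw" "D l (St kw iw qw) (Br k i j (q - 1)) + 1 \<noteq> D l (St kw iw qw) (Br k i j q)"
  shows "D l (St kw iw qw) (Br k i j (q + 1)) + 1 = D l (St kw iw qw) (Br k i j q)"
  by (rule k3E[OF assms(1)]; rule k3E[OF assms(2)]; insert assms(3-); simp add: D_def Dnext_def; (auto simp: abs_if min_def split: if_splits; presburger)?)

lemma pdec_St_B:
  assumes "kw < 3" "k < 3" "0 \<le> qw" "qw \<le> l" "l+1 \<le> q" "q \<le> 2*l" "l \<ge> 1" "Br k i j q \<noteq> St kw iw qw"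
  shows "D l (St kw iw qw) (par l (St kw iw qw) (Br k i j q)) + 1 = D l (St kw iw qw) (Br k i j q)"
proof -
  have pv: "node l k i j (q-1) = (if q = l+1 then St k i l else Br k i j (q-1))" using assms by (auto simp: node_def)
  have nx: "node l k i j (q+1) = (if q = 2*l then St ((k+1) mod 3) j 0 else Br k i j (q+1))" using assms by (auto simp: node_def)
  show ?thesis
  proof (cases "D l (St kw iw qw) (node l k i j (q-1)) + 1 = D l (St kw iw qw) (Br k i j q)")
    case True then show ?thesis by simp
  next
    case False
    have c: "q = l+1 \<or> l+1 < q" "q = 2*l \<or> q < 2*l" using assms by auto
    show ?thesis
    proof -
      have "D l (St kw iw qw) (node l k i j (q+1)) + 1 = D l (St kw iw qw) (Br k i j q)"
        using c False pv nx pB_St_fe[OF assms(1,2) refl] pB_St_fm[OF assms(1,2) refl] pB_St_me[OF assms(1,2) refl] pB_St_mm[OF assms(1,2) refl] assms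
        by (auto split: if_splits)
      then show ?thesis using False by simp
    qed
  qed
qed

lemma pB_Br_fe:
  assumes "kw < 3" "k < 3" "k2 = (k+1) mod 3" "l+1 \<le> qw" "qw \<le> 2*l" "l+1 \<le> q" "q \<le> 2*l" "q = l+1" "q = 2*l" "l \<ge> 1" "Br k i j q \<noteq> Br kw iw jw qw" "D l (Br kw iw jw qw) (St k i l) + 1 \<noteq> D l (Br kw iw jw qw) (Br k i j q)"
  shows "D l (Br kw iw jw qw) (St k2 j 0) + 1 = D l (Br kw iw jw qw) (Br k i j q)"
  by (rule k3E[OF assms(1)]; rule k3E[OF assms(2)]; insert assms(3-); simp add: D_def Dnext_def; (auto simp: abs_if min_def split: if_splits; presburger)?)

lemma pB_Br_fm:
  assumes "kw < 3" "k < 3" "k2 = (k+1) mod 3" "l+1 \<le> qw" "qw \<le> 2*l" "l+1 \<le> q" "q \<le> 2*l" "q = l+1" "q < 2*l" "l \<ge> 1" "Br k i j q \<noteq> Br kw iw jw qw" "D l (Br kw iw jw qw) (St k i l) + 1 \<noteq> D l (Br kw iw jw qw) (Br k i j q)"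
  shows "D l (Br kw iw jw qw) (Br k i j (q + 1)) + 1 = D l (Br kw iw jw qw) (Br k i j q)"
  by (rule k3E[OF assms(1)]; rule k3E[OF assms(2)]; insert assms(3-); simp add: D_def Dnext_def; (auto simp: abs_if min_def split: if_splits; presburger)?)

lemma pB_Br_me:
  assumes "kw < 3" "k < 3" "k2 = (k+1) mod 3" "l+1 \<le> qw" "qw \<le> 2*l" "l+1 \<le> q" "q \<le> 2*l" "l+1 < q" "q = 2*l" "l \<ge> 1" "Br k i j q \<noteq> Br kw iw jw qw" "D l (Br kw iw jw qw) (Br k i j (q - 1)) + 1 \<noteq> D l (Br kw iw jw qw) (Br k i j q)"
  shows "D l (Br kw iw jw qw) (St k2 j 0) + 1 = D l (Br kw iw jw qw) (Br k i j q)"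
  by (rule k3E[OF assms(1)]; rule k3E[OF assms(2)]; insert assms(3-); simp add: D_def Dnext_def; (auto simp: abs_if min_def split: if_splits; presburger)?)

lemma pB_Br_mm:
  assumes "kw < 3" "k < 3" "k2 = (k+1) mod 3" "l+1 \<le> qw" "qw \<le> 2*l" "l+1 \<le> q" "q \<le> 2*l" "l+1 < q" "q < 2*l" "l \<ge> 1" "Br k i j q \<noteq> Br kw iw jw qw" "D l (Br kw iw jw qw) (Br k i j (q - 1)) + 1 \<noteq> D l (Br kw iw jw qw) (Br k i j q)"
  shows "D l (Br kw iw jw qw) (Br k i j (q + 1)) + 1 = D l (Br kw iw jw qw) (Br k i j q)"
  by (rule k3E[OF assms(1)]; rule k3E[OF assms(2)]; insert assms(3-); simp add: D_def Dnext_def; (auto simp: abs_if min_def split: if_splits; presburger)?)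

lemma pdec_Br_B:
  assumes "kw < 3" "k < 3" "l+1 \<le> qw" "qw \<le> 2*l" "l+1 \<le> q" "q \<le> 2*l" "l \<ge> 1" "Br k i j q \<noteq> Br kw iw jw qw"
  shows "D l (Br kw iw jw qw) (par l (Br kw iw jw qw) (Br k i j q)) + 1 = D l (Br kw iw jw qw) (Br k i j q)"
proof -
  have pv: "node l k i j (q-1) = (if q = l+1 then St k i l else Br k i j (q-1))" using assms by (auto simp: node_def)
  have nx: "node l k i j (q+1) = (if q = 2*l then St ((k+1) mod 3) j 0 else Br k i j (q+1))" using assms by (auto simp: node_def)
  show ?thesis
  proof (cases "D l (Br kw iw jw qw) (node l k i j (q-1)) + 1 = D l (Br kw iw jw qw) (Br k i j q)")
    case True then show ?thesis by simp
  next
    case False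
    have c: "q = l+1 \<or> l+1 < q" "q = 2*l \<or> q < 2*l" using assms by auto
    show ?thesis
    proof -
      have "D l (Br kw iw jw qw) (node l k i j (q+1)) + 1 = D l (Br kw iw jw qw) (Br k i j q)"
        using c False pv nx pB_Br_fe[OF assms(1,2) refl] pB_Br_fm[OF assms(1,2) refl] pB_Br_me[OF assms(1,2) refl] pB_Br_mm[OF assms(1,2) refl] assms
        by (auto split: if_splits)
      then show ?thesis using False by simp
    qed
  qed
qed

lemma pdec_St_S0:
  assumes "kw < 3" "k < 3" "0 \<le> qw" "qw \<le> l" "l \<ge> 1" "St k i 0 \<noteq> St kw iw qw"
  shows "D l (St kw iw qw) (par l (St kw iw qw) (St k i 0)) + 1 = D l (St kw iw qw) (St k i 0)"
  by (rule k3E[OF assms(1)]; rule k3E[OF assms(2)]; insert assms(3-); simp add: D_def Dnext_def node_def parQ_def; (auto simp: abs_if min_def)?)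

lemma pdec_St_Sm:
  assumes "kw < 3" "k < 3" "0 \<le> qw" "qw \<le> l" "0 < q" "q \<le> l" "l \<ge> 1" "St k i q \<noteq> St kw iw qw"
  shows "D l (St kw iw qw) (par l (St kw iw qw) (St k i q)) + 1 = D l (St kw iw qw) (St k i q)"
  by (rule k3E[OF assms(1)]; rule k3E[OF assms(2)]; insert assms(3-); simp add: D_def Dnext_def node_def parQ_def; (auto simp: abs_if min_def)?)

lemma pdec_Br_S0:
  assumes "kw < 3" "k < 3" "l+1 \<le> qw" "qw \<le> 2*l" "l \<ge> 1" "St k i 0 \<noteq> Br kw iw jw qw"
  shows "D l (Br kw iw jw qw) (par l (Br kw iw jw qw) (St k i 0)) + 1 = D l (Br kw iw jw qw) (St k i 0)"
  by (rule k3E[OF assms(1)]; rule k3E[OF assms(2)]; insert assms(3-); simp add: D_def Dnext_def node_def parQ_def; (auto simp: abs_if min_def)?)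

lemma pdec_Br_Sm:
  assumes "kw < 3" "k < 3" "l+1 \<le> qw" "qw \<le> 2*l" "0 < q" "q \<le> l" "l \<ge> 1" "St k i q \<noteq> Br kw iw jw qw"
  shows "D l (Br kw iw jw qw) (par l (Br kw iw jw qw) (St k i q)) + 1 = D l (Br kw iw jw qw) (St k i q)"
  by (rule k3E[OF assms(1)]; rule k3E[OF assms(2)]; insert assms(3-); simp add: D_def Dnext_def node_def parQ_def; (auto simp: abs_if min_def)?)

lemma puniq_St_E1_0:
  assumes "kw < 3" "k < 3" "0 \<le> qw" "qw \<le> l" "i \<noteq> i2" "l \<ge> 1" "D l (St kw iw qw) (St k i 0) + 1 = D l (St kw iw qw) (St k i2 0)"
  shows "St k i 0 = par l (St kw iw qw) (St k i2 0)"
  by (rule k3E[OF assms(1)]; rule k3E[OF assms(2)]; insert assms(3-); simp add: D_def Dnext_def node_def parQ_def; (auto simp: abs_if min_def split: if_splits; presburger)?)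

lemma puniq_St_E1_1:
  assumes "kw < 3" "k < 3" "0 \<le> qw" "qw \<le> l" "i \<noteq> i2" "l \<ge> 1" "D l (St kw iw qw) (St k i2 0) + 1 = D l (St kw iw qw) (St k i 0)"
  shows "St k i2 0 = par l (St kw iw qw) (St k i 0)"
  by (rule k3E[OF assms(1)]; rule k3E[OF assms(2)]; insert assms(3-); simp add: D_def Dnext_def node_def parQ_def; (auto simp: abs_if min_def split: if_splits; presburger)?)

lemma puniq_St_E2_0:
  assumes "kw < 3" "k < 3" "0 \<le> qw" "qw \<le> l" "0 \<le> q" "q < l" "l \<ge> 1" "D l (St kw iw qw) (St k i q) + 1 = D l (St kw iw qw) (St k i (q+1))"
  shows "St k i q = par l (St kw iw qw) (St k i (q+1))"
  by (rule k3E[OF assms(1)]; rule k3E[OF assms(2)]; insert assms(3-); simp add: D_def Dnext_def node_def parQ_def; (auto simp: abs_if min_def split: if_splits; presburger)?)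

lemma puniq_St_E2_1:
  assumes "kw < 3" "k < 3" "0 \<le> qw" "qw \<le> l" "0 \<le> q" "q < l" "l \<ge> 1" "D l (St kw iw qw) (St k i (q+1)) + 1 = D l (St kw iw qw) (St k i q)"
  shows "St k i (q+1) = par l (St kw iw qw) (St k i q)"
  by (rule k3E[OF assms(1)]; rule k3E[OF assms(2)]; insert assms(3-); simp add: D_def Dnext_def node_def parQ_def; (auto simp: abs_if min_def split: if_splits; presburger)?)

lemma puniq_St_E3_0:
  assumes "kw < 3" "k < 3" "0 \<le> qw" "qw \<le> l" "l \<ge> 1" "D l (St kw iw qw) (St k i l) + 1 = D l (St kw iw qw) (Br k i j (l+1))"
  shows "St k i l = par l (St kw iw qw) (Br k i j (l+1))"
  by (rule k3E[OF assms(1)]; rule k3E[OF assms(2)]; insert assms(3-); simp add: D_def Dnext_def node_def parQ_def; (auto simp: abs_if min_def split: if_splits; presburger)?)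

lemma puniq_St_E3_1:
  assumes "kw < 3" "k < 3" "0 \<le> qw" "qw \<le> l" "l \<ge> 1" "D l (St kw iw qw) (Br k i j (l+1)) + 1 = D l (St kw iw qw) (St k i l)"
  shows "Br k i j (l+1) = par l (St kw iw qw) (St k i l)"
  by (rule k3E[OF assms(1)]; rule k3E[OF assms(2)]; insert assms(3-); simp add: D_def Dnext_def node_def parQ_def; (auto simp: abs_if min_def split: if_splits; presburger)?)

lemma puniq_St_E4_0:
  assumes "kw < 3" "k < 3" "0 \<le> qw" "qw \<le> l" "l+1 \<le> q" "q < 2*l" "l \<ge> 1" "D l (St kw iw qw) (Br k i j q) + 1 = D l (St kw iw qw) (Br k i j (q+1))"
  shows "Br k i j q = par l (St kw iw qw) (Br k i j (q+1))"
  by (rule k3E[OF assms(1)]; rule k3E[OF assms(2)]; insert assms(3-); simp add: D_def Dnext_def node_def parQ_def; (auto simp: abs_if min_def split: if_splits; presburger)?)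

lemma puniq_St_E4_1:
  assumes "kw < 3" "k < 3" "0 \<le> qw" "qw \<le> l" "l+1 \<le> q" "q < 2*l" "l \<ge> 1" "D l (St kw iw qw) (Br k i j (q+1)) + 1 = D l (St kw iw qw) (Br k i j q)"
  shows "Br k i j (q+1) = par l (St kw iw qw) (Br k i j q)"
  by (rule k3E[OF assms(1)]; rule k3E[OF assms(2)]; insert assms(3-); simp add: D_def Dnext_def node_def parQ_def; (auto simp: abs_if min_def split: if_splits; presburger)?)

lemma puniq_St_E5_0:
  assumes "kw < 3" "k < 3" "k2 = (k+1) mod 3" "0 \<le> qw" "qw \<le> l" "l \<ge> 1" "D l (St kw iw qw) (Br k i j (2*l)) + 1 = D l (St kw iw qw) (St k2 j 0)"
  shows "Br k i j (2*l) = par l (St kw iw qw) (St k2 j 0)"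
  by (rule k3E[OF assms(1)]; rule k3E[OF assms(2)]; insert assms(3-); simp add: D_def Dnext_def node_def parQ_def; (auto simp: abs_if min_def split: if_splits; presburger)?)

lemma puniq_St_E5_1:
  assumes "kw < 3" "k < 3" "k2 = (k+1) mod 3" "0 \<le> qw" "qw \<le> l" "l \<ge> 1" "D l (St kw iw qw) (St k2 j 0) + 1 = D l (St kw iw qw) (Br k i j (2*l))"
  shows "St k2 j 0 = par l (St kw iw qw) (Br k i j (2*l))"
  by (rule k3E[OF assms(1)]; rule k3E[OF assms(2)]; insert assms(3-); simp add: D_def Dnext_def node_def parQ_def; (auto simp: abs_if min_def split: if_splits; presburger)?)

lemma puniq_Br_E1_0:
  assumes "kw < 3" "k < 3" "l+1 \<le> qw" "qw \<le> 2*l" "i \<noteq> i2" "l \<ge> 1" "D l (Br kw iw jw qw) (St k i 0) + 1 = D l (Br kw iw jw qw) (St k i2 0)"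
  shows "St k i 0 = par l (Br kw iw jw qw) (St k i2 0)"
  by (rule k3E[OF assms(1)]; rule k3E[OF assms(2)]; insert assms(3-); simp add: D_def Dnext_def node_def parQ_def; (auto simp: abs_if min_def split: if_splits; presburger)?)

lemma puniq_Br_E1_1:
  assumes "kw < 3" "k < 3" "l+1 \<le> qw" "qw \<le> 2*l" "i \<noteq> i2" "l \<ge> 1" "D l (Br kw iw jw qw) (St k i2 0) + 1 = D l (Br kw iw jw qw) (St k i 0)"
  shows "St k i2 0 = par l (Br kw iw jw qw) (St k i 0)"
  by (rule k3E[OF assms(1)]; rule k3E[OF assms(2)]; insert assms(3-); simp add: D_def Dnext_def node_def parQ_def; (auto simp: abs_if min_def split: if_splits; presburger)?)

lemma puniq_Br_E2_0:
  assumes "kw < 3" "k < 3" "l+1 \<le> qw" "qw \<le> 2*l" "0 \<le> q" "q < l" "l \<ge> 1" "D l (Br kw iw jw qw) (St k i q) + 1 = D l (Br kw iw jw qw) (St k i (q+1))"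
  shows "St k i q = par l (Br kw iw jw qw) (St k i (q+1))"
  by (rule k3E[OF assms(1)]; rule k3E[OF assms(2)]; insert assms(3-); simp add: D_def Dnext_def node_def parQ_def; (auto simp: abs_if min_def split: if_splits; presburger)?)

lemma puniq_Br_E2_1:
  assumes "kw < 3" "k < 3" "l+1 \<le> qw" "qw \<le> 2*l" "0 \<le> q" "q < l" "l \<ge> 1" "D l (Br kw iw jw qw) (St k i (q+1)) + 1 = D l (Br kw iw jw qw) (St k i q)"
  shows "St k i (q+1) = par l (Br kw iw jw qw) (St k i q)"
  by (rule k3E[OF assms(1)]; rule k3E[OF assms(2)]; insert assms(3-); simp add: D_def Dnext_def node_def parQ_def; (auto simp: abs_if min_def split: if_splits; presburger)?)

lemma puniq_Br_E3_0:
  assumes "kw < 3" "k < 3" "l+1 \<le> qw" "qw \<le> 2*l" "l \<ge> 1" "D l (Br kw iw jw qw) (St k i l) + 1 = D l (Br kw iw jw qw) (Br k i j (l+1))"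
  shows "St k i l = par l (Br kw iw jw qw) (Br k i j (l+1))"
  by (rule k3E[OF assms(1)]; rule k3E[OF assms(2)]; insert assms(3-); simp add: D_def Dnext_def node_def parQ_def; (auto simp: abs_if min_def split: if_splits; presburger)?)

lemma puniq_Br_E3_1:
  assumes "kw < 3" "k < 3" "l+1 \<le> qw" "qw \<le> 2*l" "l \<ge> 1" "D l (Br kw iw jw qw) (Br k i j (l+1)) + 1 = D l (Br kw iw jw qw) (St k i l)"
  shows "Br k i j (l+1) = par l (Br kw iw jw qw) (St k i l)"
  by (rule k3E[OF assms(1)]; rule k3E[OF assms(2)]; insert assms(3-); simp add: D_def Dnext_def node_def parQ_def; (auto simp: abs_if min_def split: if_splits; presburger)?)

lemma puniq_Br_E4_0:
  assumes "kw < 3" "k < 3" "l+1 \<le> qw" "qw \<le> 2*l" "l+1 \<le> q" "q < 2*l" "l \<ge> 1" "D l (Br kw iw jw qw) (Br k i j q) + 1 = D l (Br kw iw jw qw) (Br k i j (q+1))"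
  shows "Br k i j q = par l (Br kw iw jw qw) (Br k i j (q+1))"
  by (rule k3E[OF assms(1)]; rule k3E[OF assms(2)]; insert assms(3-); simp add: D_def Dnext_def node_def parQ_def; (auto simp: abs_if min_def split: if_splits; presburger)?)

lemma puniq_Br_E4_1:
  assumes "kw < 3" "k < 3" "l+1 \<le> qw" "qw \<le> 2*l" "l+1 \<le> q" "q < 2*l" "l \<ge> 1" "D l (Br kw iw jw qw) (Br k i j (q+1)) + 1 = D l (Br kw iw jw qw) (Br k i j q)"
  shows "Br k i j (q+1) = par l (Br kw iw jw qw) (Br k i j q)"
  by (rule k3E[OF assms(1)]; rule k3E[OF assms(2)]; insert assms(3-); simp add: D_def Dnext_def node_def parQ_def; (auto simp: abs_if min_def split: if_splits; presburger)?)

lemma puniq_Br_E5_0: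
  assumes "kw < 3" "k < 3" "k2 = (k+1) mod 3" "l+1 \<le> qw" "qw \<le> 2*l" "l \<ge> 1" "D l (Br kw iw jw qw) (Br k i j (2*l)) + 1 = D l (Br kw iw jw qw) (St k2 j 0)"
  shows "Br k i j (2*l) = par l (Br kw iw jw qw) (St k2 j 0)"
  by (rule k3E[OF assms(1)]; rule k3E[OF assms(2)]; insert assms(3-); simp add: D_def Dnext_def node_def parQ_def; (auto simp: abs_if min_def split: if_splits; presburger)?)

lemma puniq_Br_E5_1:
  assumes "kw < 3" "k < 3" "k2 = (k+1) mod 3" "l+1 \<le> qw" "qw \<le> 2*l" "l \<ge> 1" "D l (Br kw iw jw qw) (St k2 j 0) + 1 = D l (Br kw iw jw qw) (Br k i j (2*l))"
  shows "St k2 j 0 = par l (Br kw iw jw qw) (Br k i j (2*l))"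
  by (rule k3E[OF assms(1)]; rule k3E[OF assms(2)]; insert assms(3-); simp add: D_def Dnext_def node_def parQ_def; (auto simp: abs_if min_def split: if_splits; presburger)?)

lemma dnn_St_St:
  assumes "kw < 3" "k < 3" "0 \<le> qw" "qw \<le> l" "0 \<le> q" "q \<le> l" "l \<ge> 1"
  shows "D l (St kw iw qw) (St k i q) \<ge> 0"
  by (rule k3E[OF assms(1)]; rule k3E[OF assms(2)]; insert assms(3-); simp add: D_def Dnext_def; (auto simp: abs_if min_def split: if_splits; presburger)?)

lemma dpos_St_St:
  assumes "kw < 3" "k < 3" "0 \<le> qw" "qw \<le> l" "0 \<le> q" "q \<le> l" "l \<ge> 1" "D l (St kw iw qw) (St k i q) = 0"
  shows "St k i q = St kw iw qw"
  by (rule k3E[OF assms(1)]; rule k3E[OF assms(2)]; insert assms(3-); simp add: D_def Dnext_def; (auto simp: abs_if min_def split: if_splits; presburger)?)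

lemma dnn_St_Br:
  assumes "kw < 3" "k < 3" "0 \<le> qw" "qw \<le> l" "l+1 \<le> q" "q \<le> 2*l" "l \<ge> 1"
  shows "D l (St kw iw qw) (Br k i j q) \<ge> 0"
  by (rule k3E[OF assms(1)]; rule k3E[OF assms(2)]; insert assms(3-); simp add: D_def Dnext_def; (auto simp: abs_if min_def split: if_splits; presburger)?)

lemma dpos_St_Br:
  assumes "kw < 3" "k < 3" "0 \<le> qw" "qw \<le> l" "l+1 \<le> q" "q \<le> 2*l" "l \<ge> 1" "D l (St kw iw qw) (Br k i j q) = 0"
  shows "Br k i j q = St kw iw qw"
  by (rule k3E[OF assms(1)]; rule k3E[OF assms(2)]; insert assms(3-); simp add: D_def Dnext_def; (auto simp: abs_if min_def split: if_splits; presburger)?)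

lemma dnn_Br_St:
  assumes "kw < 3" "k < 3" "l+1 \<le> qw" "qw \<le> 2*l" "0 \<le> q" "q \<le> l" "l \<ge> 1"
  shows "D l (Br kw iw jw qw) (St k i q) \<ge> 0"
  by (rule k3E[OF assms(1)]; rule k3E[OF assms(2)]; insert assms(3-); simp add: D_def Dnext_def; (auto simp: abs_if min_def split: if_splits; presburger)?)

lemma dpos_Br_St:
  assumes "kw < 3" "k < 3" "l+1 \<le> qw" "qw \<le> 2*l" "0 \<le> q" "q \<le> l" "l \<ge> 1" "D l (Br kw iw jw qw) (St k i q) = 0"
  shows "St k i q = Br kw iw jw qw"
  by (rule k3E[OF assms(1)]; rule k3E[OF assms(2)]; insert assms(3-); simp add: D_def Dnext_def; (auto simp: abs_if min_def split: if_splits; presburger)?)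

lemma dnn_Br_Br:
  assumes "kw < 3" "k < 3" "l+1 \<le> qw" "qw \<le> 2*l" "l+1 \<le> q" "q \<le> 2*l" "l \<ge> 1"
  shows "D l (Br kw iw jw qw) (Br k i j q) \<ge> 0"
  by (rule k3E[OF assms(1)]; rule k3E[OF assms(2)]; insert assms(3-); simp add: D_def Dnext_def; (auto simp: abs_if min_def split: if_splits; presburger)?)

lemma dpos_Br_Br:
  assumes "kw < 3" "k < 3" "l+1 \<le> qw" "qw \<le> 2*l" "l+1 \<le> q" "q \<le> 2*l" "l \<ge> 1" "D l (Br kw iw jw qw) (Br k i j q) = 0"
  shows "Br k i j q = Br kw iw jw qw"
  by (rule k3E[OF assms(1)]; rule k3E[OF assms(2)]; insert assms(3-); simp add: D_def Dnext_def; (auto simp: abs_if min_def split: if_splits; presburger)?)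
lemma D_refl: "D l a a = 0"
  by (cases a) (simp_all add: D_def)

lemma Dnn: assumes "cvalid m n p l w" "cvalid m n p l v" "l \<ge> 1" shows "D l w v \<ge> 0"
  using assms by (cases w; cases v) (auto intro: dnn_St_St dnn_St_Br dnn_Br_St dnn_Br_Br)

lemma Dpos: assumes "cvalid m n p l w" "cvalid m n p l v" "l \<ge> 1" "D l w v = 0" shows "v = w"
  using assms apply (cases w; cases v; simp only: cvalid.simps; elim conjE)
  apply (rule dpos_St_St dpos_St_Br dpos_Br_St dpos_Br_Br; assumption)
  apply (rule dpos_St_St dpos_St_Br dpos_Br_St dpos_Br_Br; assumption)
  apply (rule dpos_St_St dpos_St_Br dpos_Br_St dpos_Br_Br; assumption)
  apply (rule dpos_St_St dpos_St_Br dpos_Br_St dpos_Br_Br; assumption)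
  done

lemma Clip: assumes "cvalid m n p l w" "cvalid m n p l a" "cvalid m n p l b" "cedge l a b" "l \<ge> 1"
  shows "D l w b \<le> D l w a + 1"
  using assms unfolding cedge_def
  apply (cases w; cases a; cases b)
  apply (simp_all only: cvalid.simps carc.simps)
  apply safe
  apply (rule lip_St_E1_0 lip_St_E1_1 lip_St_E2_0 lip_St_E2_1 lip_St_E3_0 lip_St_E3_1 lip_St_E4_0 lip_St_E4_1 lip_St_E5_0 lip_St_E5_1 lip_Br_E1_0 lip_Br_E1_1 lip_Br_E2_0 lip_Br_E2_1 lip_Br_E3_0 lip_Br_E3_1 lip_Br_E4_0 lip_Br_E4_1 lip_Br_E5_0 lip_Br_E5_1; (assumption | rule refl))+
  done
lemma Cuniq: assumes "cvalid m n p l w" "cvalid m n p l u" "cvalid m n p l v" "cedge l u v" "l \<ge> 1"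
  "D l w u + 1 = D l w v"
  shows "u = par l w v"
  using assms unfolding cedge_def
  apply (cases w; cases u; cases v)
  apply (simp_all only: cvalid.simps carc.simps)
  apply safe
  apply (rule puniq_St_E1_0 puniq_St_E1_1 puniq_St_E2_0 puniq_St_E2_1 puniq_St_E3_0 puniq_St_E3_1 puniq_St_E4_0 puniq_St_E4_1 puniq_St_E5_0 puniq_St_E5_1 puniq_Br_E1_0 puniq_Br_E1_1 puniq_Br_E2_0 puniq_Br_E2_1 puniq_Br_E3_0 puniq_Br_E3_1 puniq_Br_E4_0 puniq_Br_E4_1 puniq_Br_E5_0 puniq_Br_E5_1; (assumption | rule refl))+
  done

lemma Cdec: assumes "cvalid m n p l w" "cvalid m n p l v" "v \<noteq> w" "l \<ge> 1"
  shows "D l w (par l w v) + 1 = D l w v"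
proof (cases v)
  case (St k i q)
  note vS = St
  show ?thesis
  proof (cases "q = 0")
    case True
    show ?thesis
    proof (cases w)
      case (St kw iw qw)
      show ?thesis unfolding \<open>w = _\<close> \<open>v = _\<close> True
        by (rule pdec_St_S0) (insert assms vS True \<open>w = _\<close>, auto)
    next
      case (Br kw iw jw qw)
      show ?thesis unfolding \<open>w = _\<close> \<open>v = _\<close> True
        by (rule pdec_Br_S0) (insert assms vS True \<open>w = _\<close>, auto)
    qed
  next
    case False
    show ?thesis
    proof (cases w)
      case (St kw iw qw)
      show ?thesis unfolding \<open>w = _\<close> \<open>v = _\<close>
        by (rule pdec_St_Sm) (insert assms vS False \<open>w = _\<close>, auto)
    next
      case (Br kw iw jw qw)
      show ?thesis unfolding \<open>w = _\<close> \<open>v = _\<close>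
        by (rule pdec_Br_Sm) (insert assms vS False \<open>w = _\<close>, auto)
    qed
  qed
next
  case (Br k i j q)
  note vB = Br
    show ?thesis
    proof (cases w)
      case (St kw iw qw)
      show ?thesis unfolding \<open>w = _\<close> \<open>v = _\<close>
        by (rule pdec_St_B) (insert assms vB \<open>w = _\<close>, auto)
    next
      case (Br kw iw jw qw)
      show ?thesis unfolding \<open>w = _\<close> \<open>v = _\<close>
        by (rule pdec_Br_B) (insert assms vB \<open>w = _\<close>, auto)
    qed
qed
lemma m1: "(k::nat) < 3 \<Longrightarrow> ((k+1) mod 3 + 1) mod 3 = (k+2) mod 3" by presburger
lemma m2: "(k::nat) < 3 \<Longrightarrow> ((k+2) mod 3 + 1) mod 3 = k" by presburger
lemma m3: "(k::nat) < 3 \<Longrightarrow> k' < 3 \<Longrightarrow> k' \<noteq> k \<Longrightarrow> k' \<noteq> (k+1) mod 3 \<Longrightarrow> k' = (k+2) mod 3" by presburger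

lemma valid_cp: "cvalid m n p l w \<Longrightarrow> cp w < 3" by (cases w) auto
lemma valid_sp: "cvalid m n p l w \<Longrightarrow> sp w < H_size m n p (cp w)" by (cases w) auto
lemma valid_br: "cvalid m n p l w \<Longrightarrow> (\<And>k. 0 < H_size m n p k) \<Longrightarrow> br w < H_size m n p ((cp w + 1) mod 3)" by (cases w) auto

lemma Cvalid_par: assumes "cvalid m n p l w" "cvalid m n p l v" "l \<ge> 1"
  "\<And>k. 0 < H_size m n p k"
  shows "cvalid m n p l (par l w v)"
proof (cases v)
  case (St k i q)
  have w: "cp w < 3" "sp w < H_size m n p (cp w)" "br w < H_size m n p ((cp w + 1) mod 3)"
    using valid_cp valid_sp valid_br assms by blast+
  have k: "k < 3" "i < H_size m n p k" "0 \<le> q" "q \<le> l" using assms St by auto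
  show ?thesis
  proof (cases "q = 0")
    case True
    have "cvalid m n p l (parQ l w k i)"
    proof -
      consider "cp w = k" | "cp w = (k+1) mod 3" | "cp w = (k+2) mod 3" using m3 k(1) w(1) by blast
      then show ?thesis
      proof cases
        case 1 then show ?thesis unfolding parQ_def using w k assms(3) by auto
      next
        case 2 then show ?thesis unfolding parQ_def using w k assms(3) m1[OF k(1)] m2[OF k(1)] by auto
      next
        case 3
        then have "cp w \<noteq> k" "cp w \<noteq> (k+1) mod 3" using k(1) by presburger+
        then show ?thesis unfolding parQ_def using 3 w k assms(3) m1[OF k(1)] m2[OF k(1)] by auto
      qed
    qed
    then show ?thesis using St True by simp
  next
    case False
    have j: "(if cp w = k then br w else if cp w = (k+1) mod 3 then sp w else 0) < H_size m n p ((k+1) mod 3)"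
      using w assms(4) by auto
    show ?thesis using St False k j assms(3) by (auto simp del: cvalid.simps simp: cvalid.simps)
  qed
next
  case (Br k i j q)
  have k: "k < 3" "i < H_size m n p k" "j < H_size m n p ((k+1) mod 3)" "l+1 \<le> q" "q \<le> 2*l" using assms Br by auto
  have "cvalid m n p l (node l k i j (q-1))" "cvalid m n p l (node l k i j (q+1))"
    using k unfolding node_def by auto
  then show ?thesis using Br by simp
qed
lemma Cedge_par: assumes "cvalid m n p l w" "cvalid m n p l v" "l \<ge> 1"
  shows "cedge l (par l w v) v"
proof (cases v)
  case (St k i q)
  have w: "cp w < 3" using valid_cp assms by blast
  have k: "k < 3" "0 \<le> q" "q \<le> l" using assms St by auto
  show ?thesis
  proof (cases "q = 0")
    case True
    have "cedge l (parQ l w k i) (St k i 0)"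
    proof -
      consider "cp w = k" | "cp w = (k+1) mod 3" | "cp w = (k+2) mod 3" using m3 k(1) w(1) by blast
      then show ?thesis
      proof cases
        case 1 then show ?thesis unfolding parQ_def cedge_def using k assms(3) by auto
      next
        case 2
        then have "cp w \<noteq> k" using k(1) by presburger
        then show ?thesis unfolding parQ_def cedge_def using 2 k assms(3) m2[OF k(1)] by auto
      next
        case 3
        then have "cp w \<noteq> k" "cp w \<noteq> (k+1) mod 3" using k(1) by presburger+
        then show ?thesis unfolding parQ_def cedge_def using 3 k assms(3) m2[OF k(1)] by auto
      qed
    qed
    then show ?thesis using St True by simp
  next
    case False
    then show ?thesis using St k assms(3) unfolding cedge_def by auto
  qed
next
  case (Br k i j q)
  have k: "k < 3" "l+1 \<le> q" "q \<le> 2*l" using assms Br by auto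
  have "cedge l (node l k i j (q-1)) v" "cedge l (node l k i j (q+1)) v"
    using k Br unfolding node_def cedge_def by auto
  then show ?thesis using Br by simp
qed
fun coord :: "nat \<Rightarrow> nat \<times> hv \<Rightarrow> cv" where
  "coord s (k, X i) = St k i 0"
| "coord s (k, Y j) = St ((k+1) mod 3) j 0"
| "coord s (k, C i) = St k i (int s + 1)"
| "coord s (k, P i t) = St k i (int t)"
| "coord s (k, L i j) = Br k i j (int s + 2)"
| "coord s (k, Q i j t) = Br k i j (int s + 2 + int t)"

lemma coord_canon: "coord s (H_canon (k, x)) = coord s (k, x)"
  by (cases x) auto

definition wf :: "nat \<Rightarrow> nat \<times> hv \<Rightarrow> bool" where
  "wf s u \<longleftrightarrow> fst u < 3 \<and> (case snd u of Y _ \<Rightarrow> False | P _ t \<Rightarrow> 1 \<le> t \<and> t \<le> s | Q _ _ t \<Rightarrow> 1 \<le> t \<and> t \<le> s | _ \<Rightarrow> True)"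

lemma H_verts_iff: "u \<in> H_verts m n p s \<longleftrightarrow>
   (\<exists>k<3. \<exists>x \<in> h_verts (H_size m n p k) (H_size m n p ((k + 1) mod 3)) s. u = H_canon (k, x))"
  unfolding H_verts_def by blast

lemma H_verts_wf: "u \<in> H_verts m n p s \<Longrightarrow> wf s u"
  unfolding H_verts_iff h_verts_def wf_def by auto

lemma H_verts_valid: "u \<in> H_verts m n p s \<Longrightarrow> cvalid m n p (int s + 1) (coord s u)"
  unfolding H_verts_iff h_verts_def by auto

lemma coord_inj: "wf s u \<Longrightarrow> wf s v \<Longrightarrow> coord s u = coord s v \<Longrightarrow> u = v"
  unfolding wf_def
  apply (cases u; cases v)
  apply (rename_tac k x k' y)
  apply (case_tac x; case_tac y; auto)
  done

lemma canon_id: "(\<forall>j. x \<noteq> Y j) \<Longrightarrow> H_canon (k, x) = (k, x)"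
  by (cases x) auto

lemma in_H_verts: "k < 3 \<Longrightarrow> x \<in> h_verts (H_size m n p k) (H_size m n p ((k + 1) mod 3)) s \<Longrightarrow> (\<forall>j. x \<noteq> Y j) \<Longrightarrow> (k, x) \<in> H_verts m n p s"
  unfolding H_verts_iff by (metis canon_id)

lemma coord_surj: assumes "cvalid m n p (int s + 1) c" shows "\<exists>u \<in> H_verts m n p s. coord s u = c"
proof (cases c)
  case (St k i q)
  then have v: "k < 3" "i < H_size m n p k" "0 \<le> q" "q \<le> int s + 1" using assms by auto
  consider "q = 0" | "1 \<le> q \<and> q \<le> int s" | "q = int s + 1" using v by linarith
  then show ?thesis
  proof cases
    case 1
    have "(k, X i) \<in> H_verts m n p s" using v by (intro in_H_verts) (auto simp: h_verts_def)
    then show ?thesis using 1 St by force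
  next
    case 2
    have "(k, P i (nat q)) \<in> H_verts m n p s" using v 2 by (intro in_H_verts) (auto simp: h_verts_def)
    then show ?thesis using 2 St by force
  next
    case 3
    have "(k, C i) \<in> H_verts m n p s" using v by (intro in_H_verts) (auto simp: h_verts_def)
    then show ?thesis using 3 St by force
  qed
next
  case (Br k i j q)
  then have v: "k < 3" "i < H_size m n p k" "j < H_size m n p ((k+1) mod 3)" "int s + 2 \<le> q" "q \<le> 2 * int s + 2" using assms by auto
  consider "q = int s + 2" | "int s + 3 \<le> q" using v by linarith
  then show ?thesis
  proof cases
    case 1
    have "(k, L i j) \<in> H_verts m n p s" using v by (intro in_H_verts) (auto simp: h_verts_def)
    then show ?thesis using 1 Br by force
  next
    case 2
    have "(k, Q i j (nat (q - int s - 2))) \<in> H_verts m n p s" using v 2 by (intro in_H_verts) (auto simp: h_verts_def)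
    then show ?thesis using 2 Br by force
  qed
qed

lemma coord_xc: "t \<le> s + 1 \<Longrightarrow> coord s (k, xc_node s i t) = St k i (int t)"
  unfolding xc_node_def by auto

lemma coord_ly: "t \<le> s \<Longrightarrow> coord s (k, ly_node s i j t) = Br k i j (int s + 2 + int t)"
  unfolding ly_node_def by auto

lemma coord_ly2: "coord s (k, ly_node s i j (Suc s)) = St ((k+1) mod 3) j 0"
  unfolding ly_node_def by auto

lemma h_arc_verts: "h_arc a b s x y \<Longrightarrow> x \<in> h_verts a b s \<and> y \<in> h_verts a b s"
  unfolding h_arc_def h_verts_def xc_node_def ly_node_def by (auto split: if_splits)

lemma h_arc_coord: assumes "h_arc (H_size m n p k) (H_size m n p ((k + 1) mod 3)) s x y" "k < 3"
  shows "carc (int s + 1) (coord s (k, x)) (coord s (k, y))"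
  using assms unfolding h_arc_def
proof (elim disjE exE conjE)
  fix i t assume "t \<le> s" "x = xc_node s i t" "y = xc_node s i (t+1)"
  then show ?thesis by (simp add: coord_xc)
next
  fix i j t assume a: "t \<le> s" "x = ly_node s i j t" "y = ly_node s i j (t+1)"
  show ?thesis
  proof (cases "t = s")
    case True then show ?thesis using a by (simp add: coord_ly coord_ly2)
  next
    case False then show ?thesis using a by (simp add: coord_ly)
  qed
qed auto

lemma carc_h_arc: assumes "carc (int s + 1) a b" "cvalid m n p (int s + 1) a" "cvalid m n p (int s + 1) b"
  shows "\<exists>k<3. \<exists>x y. h_arc (H_size m n p k) (H_size m n p ((k + 1) mod 3)) s x y \<and> coord s (k, x) = a \<and> coord s (k, y) = b"
proof (cases a)
  case (St k i q)
  note aS = St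
  show ?thesis
  proof (cases b)
    case (St k' i' q')
    consider "k' = k" "q = 0" "q' = 0" "i \<noteq> i'" | "k' = k" "i' = i" "0 \<le> q" "q < int s + 1" "q' = q + 1"
      using assms aS St by auto
    then show ?thesis
    proof cases
      case 1
      then show ?thesis using assms aS St
        by (intro exI[of _ k] conjI exI[of _ "X i"] exI[of _ "X i'"]) (auto simp: h_arc_def)
    next
      case 2
      have "h_arc (H_size m n p k) (H_size m n p ((k + 1) mod 3)) s (xc_node s i (nat q)) (xc_node s i (nat q + 1))"
        unfolding h_arc_def using 2 assms aS by (intro disjI2 disjI2 disjI2 disjI1) (rule exI[of _ i], rule exI[of _ "nat q"], auto)
      moreover have "coord s (k, xc_node s i (nat q)) = a" "coord s (k, xc_node s i (nat q + 1)) = b"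
        using 2 aS St by (auto simp: coord_xc)
      ultimately show ?thesis using assms aS by auto
    qed
  next
    case (Br k' i' j q')
    then have "k' = k" "i' = i" "q = int s + 1" "q' = int s + 2" using assms aS by auto
    then show ?thesis using assms aS Br
      by (intro exI[of _ k] conjI exI[of _ "C i"] exI[of _ "L i j"]) (auto simp: h_arc_def)
  qed
next
  case (Br k i j q)
  note aB = Br
  show ?thesis
  proof (cases b)
    case (St k' i' q')
    then have b: "k' = (k+1) mod 3" "i' = j" "q = 2 * (int s + 1)" "q' = 0" using assms aB by auto
    have "h_arc (H_size m n p k) (H_size m n p ((k + 1) mod 3)) s (ly_node s i j s) (ly_node s i j (s + 1))"
      unfolding h_arc_def using assms aB by (intro disjI2 disjI2 disjI2 disjI2) (rule exI[of _ i], rule exI[of _ j], rule exI[of _ s], auto)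
    moreover have "coord s (k, ly_node s i j s) = a" "coord s (k, ly_node s i j (s+1)) = b"
      using b aB St by (auto simp: coord_ly coord_ly2)
    ultimately show ?thesis using assms aB by auto
  next
    case (Br k' i' j' q')
    then have b: "k' = k" "i' = i" "j' = j" "int s + 2 \<le> q" "q < 2 * (int s + 1)" "q' = q + 1" using assms aB by auto
    define t where "t = nat (q - int s - 2)"
    have t: "t < s" "q = int s + 2 + int t" using b unfolding t_def by auto
    have "h_arc (H_size m n p k) (H_size m n p ((k + 1) mod 3)) s (ly_node s i j t) (ly_node s i j (t + 1))"
      unfolding h_arc_def using assms aB t by (intro disjI2 disjI2 disjI2 disjI2) (rule exI[of _ i], rule exI[of _ j], rule exI[of _ t], auto)
    moreover have "coord s (k, ly_node s i j t) = a" "coord s (k, ly_node s i j (t+1)) = b"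
      using b aB Br t by (auto simp: coord_ly)
    ultimately show ?thesis using assms aB by auto
  qed
qed

lemma H_edge_cedge:
  assumes "H_edge m n p s u v"
  shows "cedge (int s + 1) (coord s u) (coord s v)"
proof -
  obtain k x y where k: "k < 3" "h_edge (H_size m n p k) (H_size m n p ((k + 1) mod 3)) s x y"
    "u = H_canon (k, x)" "v = H_canon (k, y)"
    using assms unfolding H_edge_def by blast
  have cu: "coord s u = coord s (k, x)" "coord s v = coord s (k, y)" using k coord_canon by auto
  show ?thesis using k(2) h_arc_coord[OF _ k(1)] cu unfolding h_edge_def cedge_def by auto
qed

lemma H_edge_sym: "H_edge m n p s u v \<Longrightarrow> H_edge m n p s v u"
  unfolding H_edge_def h_edge_def by blast

lemma H_edge_verts: assumes "H_edge m n p s u v" shows "u \<in> H_verts m n p s" "v \<in> H_verts m n p s"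
proof -
  obtain k x y where k: "k < 3" "h_edge (H_size m n p k) (H_size m n p ((k + 1) mod 3)) s x y"
    "u = H_canon (k, x)" "v = H_canon (k, y)"
    using assms unfolding H_edge_def by blast
  have "x \<in> h_verts (H_size m n p k) (H_size m n p ((k + 1) mod 3)) s \<and> y \<in> h_verts (H_size m n p k) (H_size m n p ((k + 1) mod 3)) s"
    using k(2) h_arc_verts unfolding h_edge_def by blast
  then show "u \<in> H_verts m n p s" "v \<in> H_verts m n p s" using k unfolding H_verts_iff by blast+
qed

lemma coord_inj_V: "u \<in> H_verts m n p s \<Longrightarrow> v \<in> H_verts m n p s \<Longrightarrow> coord s u = coord s v \<Longrightarrow> u = v"
  using coord_inj H_verts_wf by blast

lemma carc_H_edge:
  assumes u: "u \<in> H_verts m n p s" and v: "v \<in> H_verts m n p s"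
    and c: "carc (int s + 1) (coord s u) (coord s v)"
  shows "H_edge m n p s u v"
proof -
  obtain k x y where k: "k < 3" "h_arc (H_size m n p k) (H_size m n p ((k + 1) mod 3)) s x y"
    "coord s (k, x) = coord s u" "coord s (k, y) = coord s v"
    using carc_h_arc[OF c H_verts_valid[OF u] H_verts_valid[OF v]] by blast
  have xy: "x \<in> h_verts (H_size m n p k) (H_size m n p ((k + 1) mod 3)) s" "y \<in> h_verts (H_size m n p k) (H_size m n p ((k + 1) mod 3)) s"
    using h_arc_verts[OF k(2)] by auto
  have V: "H_canon (k, x) \<in> H_verts m n p s" "H_canon (k, y) \<in> H_verts m n p s"
    using xy k(1) unfolding H_verts_iff by blast+
  have "u = H_canon (k, x)" using coord_inj_V[OF u V(1)] k(3) coord_canon by metis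
  moreover have "v = H_canon (k, y)" using coord_inj_V[OF v V(2)] k(4) coord_canon by metis
  ultimately show ?thesis unfolding H_edge_def h_edge_def using k by blast
qed

lemma cedge_H_edge:
  assumes u: "u \<in> H_verts m n p s" and v: "v \<in> H_verts m n p s"
    and c: "cedge (int s + 1) (coord s u) (coord s v)"
  shows "H_edge m n p s u v"
  using c carc_H_edge[OF u v] carc_H_edge[OF v u] H_edge_sym unfolding cedge_def by blast

theorem proposition3:
  fixes m n p s :: nat
  assumes "m \<ge> 2" and "n \<ge> 2" and "p \<ge> 2"
  shows "geodetic (H_verts m n p s) (H_edge m n p s)"
proof -
  define l where "l = int s + 1"
  define d where "d u v = D l (coord s u) (coord s v)" for u v
  have l1: "l \<ge> 1" unfolding l_def by simp
  have pos: "\<And>k. 0 < H_size m n p k" using assms by (simp add: H_size_def)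
  have valid: "\<And>u. u \<in> H_verts m n p s \<Longrightarrow> cvalid m n p l (coord s u)"
    using H_verts_valid unfolding l_def by blast
  show ?thesis
  proof (rule geodetic_from_dist[where d = d])
    fix u assume "u \<in> H_verts m n p s"
    then show "d u u = 0" unfolding d_def by (simp add: D_refl)
  next
    fix w v assume "w \<in> H_verts m n p s" "v \<in> H_verts m n p s"
    then show "d w v \<ge> 0" unfolding d_def using Dnn valid l1 by blast
  next
    fix w v assume a: "w \<in> H_verts m n p s" "v \<in> H_verts m n p s" "d w v = 0"
    then have "coord s v = coord s w" unfolding d_def using Dpos valid l1 by blast
    then show "v = w" using coord_inj_V a by blast
  next
    fix w u v assume a: "w \<in> H_verts m n p s" "u \<in> H_verts m n p s" "v \<in> H_verts m n p s" "H_edge m n p s u v"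
    have "cedge l (coord s u) (coord s v)" using H_edge_cedge[OF a(4)] unfolding l_def .
    then show "d w v \<le> d w u + 1" unfolding d_def using Clip valid a l1 by blast
  next
    fix u v assume "H_edge m n p s u v" then show "H_edge m n p s v u" by (rule H_edge_sym)
  next
    fix w v assume a: "w \<in> H_verts m n p s" "v \<in> H_verts m n p s" "v \<noteq> w"
    define c where "c = par l (coord s w) (coord s v)"
    have ne: "coord s v \<noteq> coord s w" using a coord_inj_V by blast
    have cv: "cvalid m n p l c" unfolding c_def using Cvalid_par valid a l1 pos by blast
    have ce: "cedge l c (coord s v)" unfolding c_def using Cedge_par valid a l1 by blast
    have cd: "D l (coord s w) c + 1 = D l (coord s w) (coord s v)" unfolding c_def using Cdec valid a l1 ne by blast
    obtain u where u: "u \<in> H_verts m n p s" "coord s u = c" using coord_surj cv unfolding l_def by blast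
    have "H_edge m n p s u v" using cedge_H_edge[OF u(1) a(2)] ce u(2) unfolding l_def by simp
    then show "\<exists>u\<in>H_verts m n p s. H_edge m n p s u v \<and> d w u + 1 = d w v"
      using u cd unfolding d_def by blast
  next
    fix w u u' v assume a: "w \<in> H_verts m n p s" "u \<in> H_verts m n p s" "u' \<in> H_verts m n p s" "v \<in> H_verts m n p s"
      "H_edge m n p s u v" "H_edge m n p s u' v" "d w u + 1 = d w v" "d w u' + 1 = d w v"
    have e: "cedge l (coord s u) (coord s v)" "cedge l (coord s u') (coord s v)"
      using H_edge_cedge[OF a(5)] H_edge_cedge[OF a(6)] unfolding l_def by auto
    have "coord s u = par l (coord s w) (coord s v)"
      using Cuniq[OF valid[OF a(1)] valid[OF a(2)] valid[OF a(4)] e(1) l1] a(7) unfolding d_def by blast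
    moreover have "coord s u' = par l (coord s w) (coord s v)"
      using Cuniq[OF valid[OF a(1)] valid[OF a(3)] valid[OF a(4)] e(2) l1] a(8) unfolding d_def by blast
    ultimately show "u = u'" using coord_inj_V a(2,3) by metis
  qed
qed

end
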